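(* For a $(w,d)$ sliding-window erasure channel with topological entropy $h_{ch}$, the zero-error capacity satisfies $1-\frac{d}{w}-h_{ch}\le C_0\le 1-\frac{d}{w}$.
   Context: Logarithms are to base $q=|\mathcal{X}|\ge2$, $\mathcal{X}$ the input alphabet. Integers $w\ge1$, $0\le d\le w$. The $(w,d)$ sliding-window erasure channel: a noise word $v(0:n-1)\in\{0,1\}^n$ is admissible if for some initial pattern $v(-w:-1)\in\{0,1\}^w$ every $w$ consecutive entries of $(v(-w),\dots,v(n-1))$ contain at most $d$ ones; output $y(t)=x(t)$ if $v(t)=0$ and $y(t)=*$ (a symbol not in $\mathcal{X}$) if $v(t)=1$. Its state graph has vertices the binary words of length $w$ with at most $d$ ones and an edge from $(b_1,\dots,b_w)$ to $(b_2,\dots,b_w,b)$ whenever the latter has at most $d$ ones; $h_{ch}=\log\lambda$ where $\lambda$ is the Perron eigenvalue of its $0/1$ adjacency matrix. A zero-error code of length $n$ is a set $\mathcal{F}\subseteq\mathcal{X}^n$ such that no output word can be produced by two distinct codewords under admissible noise; $C_0=\sup_n\sup_{\mathcal{F}}\log|\mathcal{F}|/n$. *)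

theory Defs
  imports Complex_Main "HOL-Library.Cardinality"
begin

definition ones :: "bool list \<Rightarrow> nat" where
  "ones b = length (filter id b)"

text \<open>Admissible noise words of the (w,d) sliding-window erasure channel: there is an
  initial pattern v(-w:-1) of length w such that every w consecutive entries of
  (v(-w),...,v(n-1)) contain at most d ones.\<close>
definition sw_admissible :: "nat \<Rightarrow> nat \<Rightarrow> bool list \<Rightarrow> bool" where
  "sw_admissible w d v \<longleftrightarrow>
     (\<exists>init. length init = w \<and>
        (\<forall>i \<le> length v. ones (take w (drop i (init @ v))) \<le> d))"

text \<open>Channel output: None plays the role of the erasure symbol *.\<close>
definition sw_output :: "'a list \<Rightarrow> bool list \<Rightarrow> 'a option list" where
  "sw_output x v = map (\<lambda>(a, e). if e then None else Some a) (zip x v)"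

definition zero_error_code :: "nat \<Rightarrow> nat \<Rightarrow> nat \<Rightarrow> 'a list set \<Rightarrow> bool" where
  "zero_error_code w d n F \<longleftrightarrow>
     (\<forall>x\<in>F. length x = n) \<and>
     (\<forall>x\<in>F. \<forall>x'\<in>F. \<forall>v v'. x \<noteq> x' \<longrightarrow> length v = n \<longrightarrow> length v' = n \<longrightarrow>
        sw_admissible w d v \<longrightarrow> sw_admissible w d v' \<longrightarrow>
        sw_output x v \<noteq> sw_output x' v')"

definition zero_error_capacity :: "nat \<Rightarrow> nat \<Rightarrow> 'a::finite itself \<Rightarrow> real" where
  "zero_error_capacity w d _ =
     Sup {log (real CARD('a)) (real (card F)) / real n | n F.
            n \<ge> 1 \<and> F \<noteq> {} \<and> zero_error_code w d n (F :: 'a list set)}"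

definition sw_states :: "nat \<Rightarrow> nat \<Rightarrow> bool list set" where
  "sw_states w d = {b. length b = w \<and> ones b \<le> d}"

definition sw_adj :: "nat \<Rightarrow> nat \<Rightarrow> bool list \<Rightarrow> bool list \<Rightarrow> real" where
  "sw_adj w d b b' =
     (if b \<in> sw_states w d \<and> b' \<in> sw_states w d \<and> (\<exists>c. b' = tl b @ [c]) then 1 else 0)"

definition is_eigenvalue :: "('s \<Rightarrow> 's \<Rightarrow> real) \<Rightarrow> 's set \<Rightarrow> complex \<Rightarrow> bool" where
  "is_eigenvalue A S \<mu> \<longleftrightarrow>
     (\<exists>u :: 's \<Rightarrow> complex. (\<exists>s\<in>S. u s \<noteq> 0) \<and>
        (\<forall>s\<in>S. (\<Sum>t\<in>S. complex_of_real (A s t) * u t) = \<mu> * u s))"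

text \<open>Perron eigenvalue of a nonnegative matrix = its spectral radius
  (largest modulus of an eigenvalue; by Perron--Frobenius it is itself an eigenvalue).\<close>
definition perron_eigenvalue :: "('s \<Rightarrow> 's \<Rightarrow> real) \<Rightarrow> 's set \<Rightarrow> real" where
  "perron_eigenvalue A S = Max {cmod \<mu> | \<mu>. is_eigenvalue A S \<mu>}"

definition h_ch :: "real \<Rightarrow> nat \<Rightarrow> nat \<Rightarrow> real" where
  "h_ch q w d = log q (perron_eigenvalue (sw_adj w d) (sw_states w d))"

end

theory Submission
  imports Defs "Jordan_Normal_Form.Spectral_Radius"
begin


definition Mof :: "('s \<Rightarrow> 's \<Rightarrow> real) \<Rightarrow> (nat \<Rightarrow> 's) \<Rightarrow> nat \<Rightarrow> real \<Rightarrow> complex mat" where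
  "Mof A f N r = mat N N (\<lambda>(i,j). complex_of_real (A (f i) (f j) / r))"

lemma Mof_carrier: "Mof A f N r \<in> carrier_mat N N"
  unfolding Mof_def by auto

lemma eig_to_is:
  assumes f: "bij_betw f {0..<N} S" and r: "r > 0"
    and ev: "eigenvector (Mof A f N r) v \<mu>"
  shows "is_eigenvalue A S (complex_of_real r * \<mu>)"
proof -
  let ?M = "Mof A f N r"
  let ?g = "the_inv_into {0..<N} f"
  have v: "v \<in> carrier_vec N" "v \<noteq> 0\<^sub>v N" "?M *\<^sub>v v = \<mu> \<cdot>\<^sub>v v"
    using ev Mof_carrier[of A f N r] unfolding eigenvector_def by auto
  have inj: "inj_on f {0..<N}" using f bij_betw_def by blast
  have gi: "\<And>i. i < N \<Longrightarrow> ?g (f i) = i" using the_inv_into_f_f[OF inj] by auto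
  define u where "u = (\<lambda>s. v $ (?g s))"
  from v(1,2) obtain i where i: "i < N" "v $ i \<noteq> 0"
    by (metis carrier_vecD eq_vecI index_zero_vec(1,2))
  have ex: "\<exists>s\<in>S. u s \<noteq> 0"
    using i gi f unfolding u_def bij_betw_def by force
  have eq: "\<forall>s\<in>S. (\<Sum>t\<in>S. complex_of_real (A s t) * u t) = (complex_of_real r * \<mu>) * u s"
  proof
    fix s assume s: "s \<in> S"
    then obtain i where i: "i < N" "s = f i" using f unfolding bij_betw_def by auto
    have "(\<Sum>t\<in>S. complex_of_real (A s t) * u t) = (\<Sum>j\<in>{0..<N}. complex_of_real (A (f i) (f j)) * u (f j))"
      using sum.reindex_bij_betw[OF f, of "\<lambda>t. complex_of_real (A s t) * u t"] i by simp
    also have "\<dots> = (\<Sum>j\<in>{0..<N}. complex_of_real (A (f i) (f j)) * v $ j)"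
      using gi unfolding u_def by (intro sum.cong) auto
    also have "\<dots> = complex_of_real r * (\<Sum>j\<in>{0..<N}. complex_of_real (A (f i) (f j) / r) * v $ j)"
      using r by (simp add: sum_distrib_left field_simps)
    also have "(\<Sum>j\<in>{0..<N}. complex_of_real (A (f i) (f j) / r) * v $ j) = (?M *\<^sub>v v) $ i"
      using i v(1) unfolding Mof_def by (simp add: scalar_prod_def)
    also have "\<dots> = \<mu> * v $ i" using v(3) i v(1) by simp
    finally show "(\<Sum>t\<in>S. complex_of_real (A s t) * u t) = (complex_of_real r * \<mu>) * u s"
      using i gi unfolding u_def by simp
  qed
  show ?thesis unfolding is_eigenvalue_def using ex eq by blast
qed

lemma is_to_eig:
  assumes f: "bij_betw f {0..<N} S" and r: "r > 0"
    and ev: "is_eigenvalue A S \<mu>"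
  shows "eigenvalue (Mof A f N r) (\<mu> / complex_of_real r)"
proof -
  let ?M = "Mof A f N r"
  from ev obtain u where u: "\<exists>s\<in>S. u s \<noteq> 0"
    "\<forall>s\<in>S. (\<Sum>t\<in>S. complex_of_real (A s t) * u t) = \<mu> * u s"
    unfolding is_eigenvalue_def by blast
  define v where "v = vec N (\<lambda>i. u (f i))"
  have vc: "v \<in> carrier_vec N" unfolding v_def by simp
  have vnz: "v \<noteq> 0\<^sub>v N"
  proof
    assume "v = 0\<^sub>v N"
    then have "\<And>i. i < N \<Longrightarrow> u (f i) = 0" unfolding v_def
      by (metis index_vec index_zero_vec(1))
    with u(1) f show False unfolding bij_betw_def by auto
  qed
  have "?M *\<^sub>v v = (\<mu> / complex_of_real r) \<cdot>\<^sub>v v"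
  proof (rule eq_vecI)
    show "dim_vec (?M *\<^sub>v v) = dim_vec ((\<mu> / complex_of_real r) \<cdot>\<^sub>v v)"
      using Mof_carrier[of A f N r] vc by simp
    fix i assume "i < dim_vec ((\<mu> / complex_of_real r) \<cdot>\<^sub>v v)"
    then have i: "i < N" using vc by simp
    have si: "f i \<in> S" using f i unfolding bij_betw_def by auto
    have "(?M *\<^sub>v v) $ i = (\<Sum>j\<in>{0..<N}. complex_of_real (A (f i) (f j) / r) * u (f j))"
      using i vc unfolding Mof_def v_def by (simp add: scalar_prod_def)
    also have "\<dots> = (\<Sum>j\<in>{0..<N}. complex_of_real (A (f i) (f j)) * u (f j)) / complex_of_real r"
      using r by (simp add: sum_divide_distrib field_simps)
    also have "(\<Sum>j\<in>{0..<N}. complex_of_real (A (f i) (f j)) * u (f j)) = (\<Sum>t\<in>S. complex_of_real (A (f i) t) * u t)"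
      using sum.reindex_bij_betw[OF f, of "\<lambda>t. complex_of_real (A (f i) t) * u t"] by simp
    also have "\<dots> = \<mu> * u (f i)" using u(2) si by blast
    finally show "(?M *\<^sub>v v) $ i = ((\<mu> / complex_of_real r) \<cdot>\<^sub>v v) $ i"
      using i unfolding v_def by simp
  qed
  then have "eigenvector ?M v (\<mu> / complex_of_real r)"
    unfolding eigenvector_def using vc vnz Mof_carrier[of A f N r] by simp
  then show ?thesis unfolding eigenvalue_def by blast
qed

lemma mat_pow_comm: assumes "M \<in> carrier_mat n n"
  shows "M * (M ^\<^sub>m k) = (M ^\<^sub>m k) * M"
proof (induct k)
  case 0 then show ?case using assms by simp
next
  case (Suc k)
  have P: "M ^\<^sub>m k \<in> carrier_mat n n" using assms by simp
  have "M * (M ^\<^sub>m Suc k) = (M * M ^\<^sub>m k) * M" using assoc_mult_mat[OF assms P assms] by simp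
  also have "\<dots> = (M ^\<^sub>m k * M) * M" using Suc by simp
  finally show ?case by simp
qed

lemma growth_bound:
  fixes S :: "'s set" and A :: "'s \<Rightarrow> 's \<Rightarrow> real" and g :: "nat \<Rightarrow> 's \<Rightarrow> real" and r :: real
  assumes fin: "finite S" and ne: "S \<noteq> {}" and r: "r > 0"
  and eig: "\<And>\<mu>. is_eigenvalue A S \<mu> \<Longrightarrow> cmod \<mu> \<le> r"
  and g0: "\<And>s. s\<in>S \<Longrightarrow> g 0 s = 1"
  and gS: "\<And>k s. s\<in>S \<Longrightarrow> g (Suc k) s = (\<Sum>t\<in>S. A s t * g k t)"
  shows "\<exists>C. \<exists>K::nat. \<forall>k s. s\<in>S \<longrightarrow> \<bar>g k s\<bar> \<le> C * real (k+1)^K * r^k"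
proof -
  define N where "N = card S"
  obtain f where f: "bij_betw f {0..<N} S" using ex_bij_betw_nat_finite[OF fin] N_def by blast
  have N: "N > 0" using fin ne N_def by (simp add: card_gt_0_iff)
  define M where "M = Mof A f N r"
  have Mc: "M \<in> carrier_mat N N" unfolding M_def by (rule Mof_carrier)
  have sr: "spectral_radius M \<le> 1"
  proof -
    obtain \<mu> where mu: "\<mu> \<in> spectrum M" "spectral_radius M = norm \<mu>"
      using spectral_radius_mem_max(1)[OF Mc N] by auto
    then obtain v where "eigenvector M v \<mu>" unfolding spectrum_def eigenvalue_def by auto
    from eig_to_is[OF f r this[unfolded M_def]] eig
    have "cmod (complex_of_real r * \<mu>) \<le> r" by blast
    then have "r * cmod \<mu> \<le> r * 1" using r by (simp add: norm_mult)
    then have "cmod \<mu> \<le> 1" using r by simp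
    then show ?thesis using mu by simp
  qed
  obtain c1 c2 where cb: "\<And>k. norm_bound (M ^\<^sub>m k) (c1 + c2 * real k ^ (N - 1))"
    using spectral_radius_jnf_norm_bound_le_1_upper_triangular[OF Mc sr] by blast
  define G where "G = (\<lambda>k. vec N (\<lambda>i. complex_of_real (g k (f i) / r^k)))"
  have Gc: "\<And>k. G k \<in> carrier_vec N" unfolding G_def by simp
  have fi: "\<And>i. i < N \<Longrightarrow> f i \<in> S" using f unfolding bij_betw_def by auto
  have GS: "G (Suc k) = M *\<^sub>v G k" for k
  proof (rule eq_vecI)
    show "dim_vec (G (Suc k)) = dim_vec (M *\<^sub>v G k)" using Mc unfolding G_def by simp
    fix i assume "i < dim_vec (M *\<^sub>v G k)"
    then have i: "i < N" using Mc by simp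
    have "(M *\<^sub>v G k) $ i = (\<Sum>j\<in>{0..<N}. complex_of_real (A (f i) (f j) / r) * complex_of_real (g k (f j) / r^k))"
      using i unfolding M_def Mof_def G_def by (simp add: scalar_prod_def)
    also have "\<dots> = complex_of_real ((\<Sum>j\<in>{0..<N}. A (f i) (f j) * g k (f j)) / r^(Suc k))"
      using r by (simp add: sum_divide_distrib field_simps)
    also have "(\<Sum>j\<in>{0..<N}. A (f i) (f j) * g k (f j)) = (\<Sum>t\<in>S. A (f i) t * g k t)"
      using sum.reindex_bij_betw[OF f, of "\<lambda>t. A (f i) t * g k t"] by simp
    also have "\<dots> = g (Suc k) (f i)" using gS[OF fi[OF i]] by simp
    finally show "G (Suc k) $ i = (M *\<^sub>v G k) $ i" using i unfolding G_def by simp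
  qed
  have Gk: "G k = M ^\<^sub>m k *\<^sub>v G 0" for k
  proof (induct k)
    case 0 then show ?case using Gc[of 0] Mc by simp
  next
    case (Suc k)
    have P: "M ^\<^sub>m k \<in> carrier_mat N N" using Mc by simp
    have "G (Suc k) = M *\<^sub>v (M ^\<^sub>m k *\<^sub>v G 0)" using GS Suc by simp
    also have "\<dots> = (M * M ^\<^sub>m k) *\<^sub>v G 0" using assoc_mult_mat_vec[OF Mc P Gc[of 0]] by simp
    also have "M * M ^\<^sub>m k = M ^\<^sub>m Suc k" using mat_pow_comm[OF Mc] by simp
    finally show ?case .
  qed
  define C where "C = real N * (\<bar>c1\<bar> + \<bar>c2\<bar>)"
  have "\<forall>k s. s\<in>S \<longrightarrow> \<bar>g k s\<bar> \<le> C * real (k+1)^(N-1) * r^k"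
  proof (intro allI impI)
    fix k s assume s: "s \<in> S"
    then obtain i where i: "i < N" "s = f i" using f unfolding bij_betw_def by auto
    have G0: "\<And>j. j < N \<Longrightarrow> G 0 $ j = 1" unfolding G_def using g0 fi by simp
    have P: "M ^\<^sub>m k \<in> carrier_mat N N" using Mc by simp
    have "G k $ i = (\<Sum>j\<in>{0..<N}. (M ^\<^sub>m k) $$ (i,j))"
    proof -
      have "(M ^\<^sub>m k *\<^sub>v G 0) $ i = (\<Sum>j\<in>{0..<N}. (M ^\<^sub>m k) $$ (i,j) * G 0 $ j)"
        using i P Gc[of 0] Mc by (auto simp add: scalar_prod_def intro!: sum.cong)
      also have "\<dots> = (\<Sum>j\<in>{0..<N}. (M ^\<^sub>m k) $$ (i,j))" using G0 by (intro sum.cong) auto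
      finally show ?thesis using Gk[of k] by simp
    qed
    then have "norm (G k $ i) \<le> (\<Sum>j\<in>{0..<N}. norm ((M ^\<^sub>m k) $$ (i,j)))"
      by (simp add: norm_sum)
    also have "\<dots> \<le> (\<Sum>j\<in>{0..<N}. c1 + c2 * real k ^ (N - 1))"
    proof (rule sum_mono)
      fix j assume "j \<in> {0..<N}"
      then have "j < dim_col (M ^\<^sub>m k)" "i < dim_row (M ^\<^sub>m k)" using P i by auto
      then show "norm ((M ^\<^sub>m k) $$ (i,j)) \<le> c1 + c2 * real k ^ (N - 1)"
        using cb[of k] unfolding norm_bound_def by blast
    qed
    also have "\<dots> = real N * (c1 + c2 * real k ^ (N - 1))" by simp
    also have "\<dots> \<le> C * real (k+1)^(N-1)"
    proof -
      define X where "X = real (k+1)^(N-1)"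
      define y where "y = real k ^ (N-1)"
      have yX: "y \<le> X" unfolding X_def y_def by (intro power_mono) auto
      have y0: "0 \<le> y" unfolding y_def by simp
      have X1: "1 \<le> X" unfolding X_def by simp
      have a: "c1 \<le> \<bar>c1\<bar> * X"
      proof -
        have "\<bar>c1\<bar> * 1 \<le> \<bar>c1\<bar> * X" using X1 by (intro mult_left_mono) auto
        then show ?thesis by linarith
      qed
      have b: "c2 * y \<le> \<bar>c2\<bar> * X"
      proof -
        have "c2 * y \<le> \<bar>c2\<bar> * y" using y0 by (intro mult_right_mono) auto
        also have "\<dots> \<le> \<bar>c2\<bar> * X" using yX by (intro mult_left_mono) auto
        finally show ?thesis .
      qed
      have "real N * (c1 + c2 * y) \<le> real N * (\<bar>c1\<bar> * X + \<bar>c2\<bar> * X)"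
        using a b by (intro mult_left_mono) auto
      then show ?thesis unfolding C_def X_def[symmetric] y_def[symmetric] by (simp add: algebra_simps)
    qed
    finally have "norm (G k $ i) \<le> C * real (k+1)^(N-1)" .
    moreover have "norm (G k $ i) = \<bar>g k s\<bar> / r^k" using i r unfolding G_def by (simp add: norm_divide norm_power)
    ultimately have "\<bar>g k s\<bar> / r^k \<le> C * real (k+1)^(N-1)" by simp
    then show "\<bar>g k s\<bar> \<le> C * real (k+1)^(N-1) * r^k" using r by (simp add: field_simps)
  qed
  then show ?thesis by blast
qed



definition proj :: "bool list \<Rightarrow> 'a list \<Rightarrow> 'a list" where
  "proj v y = map fst (filter snd (zip y v))"

lemma ones_append[simp]: "ones (xs @ ys) = ones xs + ones ys"
  unfolding ones_def by simp

lemma ones_Cons[simp]: "ones (b # xs) = (if b then Suc (ones xs) else ones xs)"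
  unfolding ones_def by simp

lemma ones_Nil[simp]: "ones [] = 0" unfolding ones_def by simp

lemma ones_le_length: "ones xs \<le> length xs" unfolding ones_def by simp

lemma proj_len: "length y = length v \<Longrightarrow> length (proj v y) = ones v"
proof (induct v arbitrary: y)
  case Nil then show ?case by (simp add: proj_def)
next
  case (Cons b v) then show ?case by (cases y) (auto simp: proj_def)
qed

lemma proj_inj: "length y = length v \<Longrightarrow> length y' = length v \<Longrightarrow>
  (\<forall>i<length v. \<not> v!i \<longrightarrow> y!i = y'!i) \<Longrightarrow> proj v y = proj v y' \<Longrightarrow> y = y'"
proof (induct v arbitrary: y y')
  case Nil then show ?case by simp
next
  case (Cons b v)
  obtain a ys where y: "y = a # ys" using Cons(2) by (cases y) auto
  obtain a' ys' where y': "y' = a' # ys'" using Cons(3) by (cases y') auto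
  have h: "\<forall>i<length v. \<not> v!i \<longrightarrow> ys!i = ys'!i" using Cons(4) unfolding y y' by force
  show ?case
  proof (cases b)
    case True
    then have "a = a'" "proj v ys = proj v ys'" using Cons(5) unfolding y y' proj_def by auto
    then show ?thesis using Cons(1)[of ys ys'] Cons(2,3) h y y' by auto
  next
    case False
    then have "a = a'" using Cons(4) unfolding y y' by force
    moreover have "proj v ys = proj v ys'" using Cons(5) False unfolding y y' proj_def by auto
    ultimately show ?thesis using Cons(1)[of ys ys'] Cons(2,3) h y y' by auto
  qed
qed

lemma sw_output_nth: "i < length x \<Longrightarrow> i < length v \<Longrightarrow>
   sw_output x v ! i = (if v!i then None else Some (x!i))"
  unfolding sw_output_def by simp

lemma sw_output_len[simp]: "length (sw_output x v) = min (length x) (length v)"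
  unfolding sw_output_def by simp

lemma out_eq: assumes "length x = n" "length x' = n" "length v = n" "length v' = n"
  "sw_output x v = sw_output x' v'"
  shows "v = v' \<and> (\<forall>i<n. \<not> v!i \<longrightarrow> x!i = x'!i)"
proof -
  have e: "\<And>i. i < n \<Longrightarrow> (if v!i then None else Some (x!i)) = (if v'!i then None else Some (x'!i))"
    using assms sw_output_nth by metis
  have "v = v'"
  proof (rule nth_equalityI)
    show "length v = length v'" using assms by simp
    fix i assume "i < length v"
    then have "i < n" using assms by simp
    from e[OF this] show "v ! i = v' ! i" by (cases "v!i"; cases "v'!i") auto
  qed
  moreover have "\<forall>i<n. \<not> v!i \<longrightarrow> x!i = x'!i"
  proof (intro allI impI)
    fix i assume "i < n" "\<not> v!i"
    then show "x!i = x'!i" using e[OF \<open>i<n\<close>] \<open>v = v'\<close> by simp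
  qed
  ultimately show ?thesis by simp
qed

lemma proj_out: "length x = length v \<Longrightarrow> length x' = length v \<Longrightarrow>
   proj (map Not v) x = proj (map Not v) x' \<Longrightarrow> sw_output x v = sw_output x' v"
proof (induct v arbitrary: x x')
  case Nil then show ?case by (simp add: sw_output_def)
next
  case (Cons b v)
  obtain a ys where y: "x = a # ys" using Cons(2) by (cases x) auto
  obtain a' ys' where y': "x' = a' # ys'" using Cons(3) by (cases x') auto
  show ?case using Cons(1)[of ys ys'] Cons(2-4) unfolding y y'
    by (cases b) (auto simp: proj_def sw_output_def)
qed

lemma ones_drop_mono: "j' \<le> j \<Longrightarrow> ones (drop j L) \<le> ones (drop j' L)"
proof -
  assume "j' \<le> j"
  have "drop j' L = take (j-j') (drop j' L) @ drop (j - j') (drop j' L)"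
    by (rule append_take_drop_id[symmetric])
  also have "drop (j - j') (drop j' L) = drop j L" using \<open>j' \<le> j\<close> by simp
  finally have "ones (drop j' L) = ones (take (j-j') (drop j' L)) + ones (drop j L)"
    by (metis ones_append)
  then show ?thesis by simp
qed

lemma win_bound:
  assumes win: "\<forall>i. i + w \<le> length L \<longrightarrow> ones (take w (drop i L)) \<le> d"
    and w: "1 \<le> w" "w \<le> length L"
  shows "m \<le> length L \<Longrightarrow> ones (drop (length L - m) L) \<le> d * (m div w + 1)"
proof (induct m rule: less_induct)
  case (less m)
  show ?case
  proof (cases "m < w")
    case True
    have "ones (drop (length L - m) L) \<le> ones (drop (length L - w) L)"
      using True by (intro ones_drop_mono) auto
    also have "drop (length L - w) L = take w (drop (length L - w) L)" using w by simp
    also have "ones \<dots> \<le> d" using win[rule_format, of "length L - w"] w by simp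
    finally show ?thesis by simp
  next
    case False
    define j where "j = length L - m"
    have "drop j L = take w (drop j L) @ drop w (drop j L)" by (rule append_take_drop_id[symmetric])
    then have "ones (drop j L) = ones (take w (drop j L)) + ones (drop w (drop j L))"
      by (metis ones_append)
    also have "ones (take w (drop j L)) \<le> d" using win False less(2) unfolding j_def by simp
    also have "drop w (drop j L) = drop (length L - (m - w)) L"
      using False less(2) unfolding j_def by (simp add: add.commute)
    also have "ones \<dots> \<le> d * ((m - w) div w + 1)" using less(1)[of "m - w"] less(2) False w by simp
    finally have "ones (drop j L) \<le> d + d * ((m - w) div w + 1)" by simp
    also have "\<dots> = d * (m div w + 1)"
    proof -
      have "m div w = (m - w) div w + 1" using False w by (simp add: div_if)
      then show ?thesis by simp
    qed
    finally show ?thesis unfolding j_def .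
  qed
qed

lemma adm_ones:
  assumes "sw_admissible w d v" "1 \<le> w"
  shows "ones v \<le> d * (length v div w + 1)"
proof -
  obtain init where init: "length init = w"
    "\<forall>i \<le> length v. ones (take w (drop i (init @ v))) \<le> d"
    using assms(1) unfolding sw_admissible_def by blast
  define L where "L = init @ v"
  have win: "\<forall>i. i + w \<le> length L \<longrightarrow> ones (take w (drop i L)) \<le> d"
    using init unfolding L_def by auto
  have "ones (drop (length L - length v) L) \<le> d * (length v div w + 1)"
    by (rule win_bound[OF win assms(2)]) (auto simp: L_def init)
  moreover have "drop (length L - length v) L = v" unfolding L_def using init by simp
  ultimately show ?thesis by simp
qed

lemma length_filter_upt_card: "length (filter P [a..<b]) = card {j. a \<le> j \<and> j < b \<and> P j}"
proof -
  have "length (filter P [a..<b]) = card (set (filter P [a..<b]))"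
    by (rule distinct_card[symmetric]) simp
  also have "set (filter P [a..<b]) = {j. a \<le> j \<and> j < b \<and> P j}" by auto
  finally show ?thesis .
qed

lemma win_per:
  assumes w: "1 \<le> w" and d: "d \<le> w"
  shows "length (filter (\<lambda>j. j mod w < d) [i..<i+w]) = d"
proof (induct i)
  case 0
  have "{j. 0 \<le> j \<and> j < 0 + w \<and> j mod w < d} = {..<d}" using d by auto
  then show ?case unfolding length_filter_upt_card by simp
next
  case (Suc i)
  have a: "[i..<i+w] = i # [Suc i..<i+w]" using w by (simp add: upt_rec)
  have b: "[Suc i..<Suc i+w] = [Suc i..<i+w] @ [i+w]" using w by simp
  have c: "(i + w) mod w = i mod w" by simp
  define P where "P = (\<lambda>j::nat. j mod w < d)"
  have "length (filter P [Suc i..<Suc i+w]) = length (filter P [Suc i..<i+w]) + (if P i then 1 else 0)"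
    unfolding b using c by (simp add: P_def)
  also have "\<dots> = length (filter P [i..<i+w])" unfolding a by simp
  finally show ?case using Suc unfolding P_def by simp
qed

lemma f_bound:
  assumes w: "1 \<le> w" and d: "d \<le> w"
  shows "d * n \<le> length (filter (\<lambda>j. j mod w < d) [0..<n]) * w"
proof (induct n rule: less_induct)
  case (less n)
  show ?case
  proof (cases "n < w")
    case True
    have "{j. 0 \<le> j \<and> j < n \<and> j mod w < d} = {..<min n d}" using True by auto
    then have "length (filter (\<lambda>j. j mod w < d) [0..<n]) = min n d"
      unfolding length_filter_upt_card by simp
    moreover have "d * n \<le> min n d * w"
      using True d by (cases "n \<le> d") (auto simp: min_def intro: mult_le_mono)
    ultimately show ?thesis by simp
  next
    case False
    have sp: "[0..<n] = [0..<n-w] @ [n-w..<(n-w)+w]" using False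
      by (metis le_add_diff_inverse2 not_less upt_add_eq_append zero_le)
    have "length (filter (\<lambda>j. j mod w < d) [0..<n]) = length (filter (\<lambda>j. j mod w < d) [0..<n-w]) + d"
      unfolding sp using win_per[OF w d, of "n-w"] by simp
    moreover have "d * (n - w) \<le> length (filter (\<lambda>j. j mod w < d) [0..<n-w]) * w"
      using less(1)[of "n-w"] False w by simp
    ultimately show ?thesis using False
      by (simp add: algebra_simps)
  qed
qed

lemma card_lists_univ: "card {xs :: 'a::finite list. length xs = n} = CARD('a)^n"
  using card_lists_length_eq[of "UNIV :: 'a set" n] by simp

lemma finite_lists_univ: "finite {xs :: 'a::finite list. length xs = n}"
  using finite_lists_length_eq[of "UNIV :: 'a set" n] by simp

lemma ones_map: "ones (map P xs) = length (filter P xs)"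
  unfolding ones_def by (simp add: filter_map comp_def)

lemma ones_not: "ones (map Not v) + ones v = length v"
  by (induct v) auto

lemma pattern:
  fixes n w d :: nat
  assumes w: "1 \<le> w" and d: "d \<le> w"
  defines "v \<equiv> map (\<lambda>j. j mod w < d) [w..<w+n]"
  shows "sw_admissible w d v" "length v = n" "d * n \<le> ones v * w"
proof -
  define P where "P = (\<lambda>j::nat. j mod w < d)"
  define init where "init = map P [0..<w]"
  have "[0..<w+n] = [0..<w] @ [w..<w+n]" by (rule upt_add_eq_append) simp
  then have L: "init @ v = map P [0..<w+n]"
    unfolding init_def v_def P_def by simp
  have "\<forall>i \<le> length v. ones (take w (drop i (init @ v))) \<le> d"
  proof (intro allI impI)
    fix i assume "i \<le> length v"
    then have i: "i + w \<le> w + n" unfolding v_def by simp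
    have "take w (drop i (init @ v)) = map P [i..<i+w]"
      unfolding L using i by (simp add: take_map drop_map)
    then show "ones (take w (drop i (init @ v))) \<le> d"
      using win_per[OF w d, of i] unfolding P_def by (simp add: ones_map)
  qed
  moreover have "length init = w" unfolding init_def by simp
  ultimately show "sw_admissible w d v" unfolding sw_admissible_def by blast
  show "length v = n" unfolding v_def by simp
  have "[w..<w+n] = map (\<lambda>j. j + w) [0..<n]" by (simp add: map_add_upt add.commute)
  then have "ones v = length (filter (P \<circ> (\<lambda>j. j + w)) [0..<n])"
    unfolding v_def P_def[symmetric] by (simp add: ones_map filter_map)
  also have "P \<circ> (\<lambda>j. j + w) = P" unfolding P_def by auto
  finally show "d * n \<le> ones v * w" using f_bound[OF w d, of n] unfolding P_def by simp
qed

lemma code_card_upper: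
  fixes F :: "'a::finite list set"
  assumes code: "zero_error_code w d n F" and v: "sw_admissible w d v" "length v = n"
  shows "card F \<le> CARD('a) ^ (n - ones v)"
proof -
  have len: "\<forall>x\<in>F. length x = n" using code unfolding zero_error_code_def by blast
  have inj: "inj_on (proj (map Not v)) F"
  proof (rule inj_onI)
    fix x x' assume x: "x \<in> F" "x' \<in> F" "proj (map Not v) x = proj (map Not v) x'"
    then have "sw_output x v = sw_output x' v" using proj_out[of x v x'] len v by simp
    then show "x = x'" using code x v unfolding zero_error_code_def by blast
  qed
  have on: "ones (map Not v) = n - ones v" using ones_not[of v] v(2) by linarith
  have sub: "proj (map Not v) ` F \<subseteq> {xs. length xs = n - ones v}"
  proof
    fix y assume "y \<in> proj (map Not v) ` F"
    then obtain x where x: "x \<in> F" "y = proj (map Not v) x" by blast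
    have "length x = length (map Not v)" using len x v by simp
    from proj_len[OF this] show "y \<in> {xs. length xs = n - ones v}" using x on by simp
  qed
  have "card F = card (proj (map Not v) ` F)" using card_image[OF inj] by simp
  also have "\<dots> \<le> card {xs :: 'a list. length xs = n - ones v}"
    by (rule card_mono[OF finite_lists_univ sub])
  finally show ?thesis by (simp add: card_lists_univ)
qed

lemma code_rate_upper:
  fixes F :: "'a::finite list set"
  assumes code: "zero_error_code w d n F" and F: "F \<noteq> {}" and n: "n \<ge> 1"
    and w: "1 \<le> w" and d: "d \<le> w" and q: "CARD('a) \<ge> 2"
  shows "log (real CARD('a)) (real (card F)) / real n \<le> 1 - real d / real w"
proof -
  define v where "v = map (\<lambda>j. j mod w < d) [w..<w+n]"
  note p = pattern[OF w d, of n, folded v_def]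
  have cF: "card F \<le> CARD('a) ^ (n - ones v)" by (rule code_card_upper[OF code p(1,2)])
  have fin: "finite F"
  proof (rule rev_finite_subset[OF finite_lists_univ[where 'a='a, of n]])
    show "F \<subseteq> {xs. length xs = n}" using code unfolding zero_error_code_def by blast
  qed
  have cpos: "card F > 0" using fin F by (simp add: card_gt_0_iff)
  have ov: "ones v \<le> n" using ones_le_length[of v] p(2) by simp
  have "log (real CARD('a)) (real (card F)) \<le> log (real CARD('a)) (real CARD('a) ^ (n - ones v))"
  proof (rule log_mono)
    show "1 < real CARD('a)" using q by simp
    show "0 < real (card F)" using cpos by simp
    show "real (card F) \<le> real CARD('a) ^ (n - ones v)" using cF
      by (metis of_nat_le_iff of_nat_power)
  qed
  also have "\<dots> = real (n - ones v)" using q by (simp add: log_nat_power)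
  also have "\<dots> = real n - real (ones v)" using ov by simp
  also have "\<dots> \<le> real n - real d * real n / real w"
  proof -
    have "real d * real n \<le> real (ones v) * real w" using p(3) by (metis of_nat_le_iff of_nat_mult)
    then have "real d * real n / real w \<le> real (ones v)" using w by (simp add: divide_le_eq)
    then show ?thesis by simp
  qed
  also have "\<dots> = real n * (1 - real d / real w)" by (simp add: algebra_simps)
  finally show ?thesis using n by (simp add: divide_le_eq mult.commute)
qed



definition valid :: "nat \<Rightarrow> nat \<Rightarrow> bool list \<Rightarrow> bool list \<Rightarrow> bool" where
  "valid w d s v \<longleftrightarrow> (\<forall>i \<le> length v. ones (take w (drop i (s @ v))) \<le> d)"

definition cnt :: "nat \<Rightarrow> nat \<Rightarrow> nat \<Rightarrow> bool list \<Rightarrow> nat" where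
  "cnt w d k s = card {v. length v = k \<and> valid w d s v}"

lemma all_le_Suc: "(\<forall>i\<le>Suc m. P i) \<longleftrightarrow> P 0 \<and> (\<forall>j\<le>m. P (Suc j))"
proof
  assume "\<forall>i\<le>Suc m. P i" then show "P 0 \<and> (\<forall>j\<le>m. P (Suc j))" by auto
next
  assume h: "P 0 \<and> (\<forall>j\<le>m. P (Suc j))"
  show "\<forall>i\<le>Suc m. P i"
  proof (intro allI impI)
    fix i assume "i \<le> Suc m"
    then show "P i" using h by (cases i) auto
  qed
qed

lemma valid_Cons:
  assumes "length s = w" "1 \<le> w"
  shows "valid w d s (c # v) \<longleftrightarrow> ones s \<le> d \<and> valid w d (tl s @ [c]) v"
proof -
  obtain a s' where s: "s = a # s'" using assms by (cases s) auto
  have "\<And>j. drop (Suc j) (s @ c # v) = drop j ((tl s @ [c]) @ v)" unfolding s by simp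
  moreover have "take w (s @ c # v) = s" using assms by simp
  ultimately show ?thesis unfolding valid_def
    by (simp only: length_Cons all_le_Suc drop_0)
qed

lemma valid_Nil: "length s = w \<Longrightarrow> valid w d s [] \<longleftrightarrow> ones s \<le> d"
  unfolding valid_def by simp

lemma valid_states: "length s = w \<Longrightarrow> valid w d s v \<Longrightarrow> s \<in> sw_states w d"
  unfolding valid_def sw_states_def by (auto dest: spec[of _ 0])

lemma finite_states: "finite (sw_states w d)"
proof (rule rev_finite_subset[OF finite_lists_univ[where 'a=bool, of w]])
  show "sw_states w d \<subseteq> {xs. length xs = w}" unfolding sw_states_def by auto
qed

lemma fin_len_sub: "finite {v :: bool list. length v = k \<and> P v}"
  by (rule rev_finite_subset[OF finite_lists_univ[where 'a=bool, of k]]) auto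

lemma cnt0: "s \<in> sw_states w d \<Longrightarrow> cnt w d 0 s = 1"
proof -
  assume s: "s \<in> sw_states w d"
  have "{v. length v = 0 \<and> valid w d s v} = {[]}"
    using s valid_Nil[of s w d] unfolding sw_states_def by auto
  then show ?thesis unfolding cnt_def by simp
qed

lemma cnt_notin: "length t = w \<Longrightarrow> t \<notin> sw_states w d \<Longrightarrow> cnt w d k t = 0"
proof -
  assume "length t = w" "t \<notin> sw_states w d"
  then have "{v. length v = k \<and> valid w d t v} = {}" using valid_states by blast
  then show ?thesis unfolding cnt_def by (metis card.empty)
qed

lemma cnt_Suc:
  assumes s: "s \<in> sw_states w d" and w: "1 \<le> w"
  shows "cnt w d (Suc k) s = cnt w d k (tl s @ [False]) + cnt w d k (tl s @ [True])"
proof -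
  have ls: "length s = w" "ones s \<le> d" using s unfolding sw_states_def by auto
  define B where "B = (\<lambda>c. {v. length v = k \<and> valid w d (tl s @ [c]) v})"
  have eq: "{v. length v = Suc k \<and> valid w d s v} = Cons False ` B False \<union> Cons True ` B True"
  proof (rule Set.set_eqI)
    fix v
    show "v \<in> {v. length v = Suc k \<and> valid w d s v} \<longleftrightarrow> v \<in> Cons False ` B False \<union> Cons True ` B True"
    proof (cases v)
      case Nil then show ?thesis unfolding B_def by auto
    next
      case (Cons c v')
      then show ?thesis using valid_Cons[OF ls(1) w, of d c v'] ls(2) unfolding B_def
        by (cases c) auto
    qed
  qed
  have "card (Cons False ` B False \<union> Cons True ` B True) = card (Cons False ` B False) + card (Cons True ` B True)"
    by (rule card_Un_disjoint) (auto simp: B_def fin_len_sub)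
  also have "\<dots> = card (B False) + card (B True)" by (simp add: card_image)
  finally show ?thesis unfolding cnt_def eq B_def .
qed

lemma cnt_rec:
  assumes s: "s \<in> sw_states w d" and w: "1 \<le> w"
  shows "real (cnt w d (Suc k) s) = (\<Sum>t\<in>sw_states w d. sw_adj w d s t * real (cnt w d k t))"
proof -
  let ?S = "sw_states w d"
  let ?g = "\<lambda>t. real (cnt w d k t)"
  define t0 where "t0 = tl s @ [False]"
  define t1 where "t1 = tl s @ [True]"
  define T where "T = {t0, t1}"
  have ls: "length s = w" using s unfolding sw_states_def by auto
  have lt: "length t0 = w" "length t1 = w" using ls w unfolding t0_def t1_def by auto
  have ne: "t0 \<noteq> t1" unfolding t0_def t1_def by simp
  have "(\<Sum>t\<in>?S. sw_adj w d s t * ?g t) = (\<Sum>t\<in>?S. if t \<in> T then ?g t else 0)"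
  proof (rule sum.cong)
    fix t assume t: "t \<in> ?S"
    have h: "(\<exists>c. t = tl s @ [c]) \<longleftrightarrow> t \<in> T"
    proof
      assume "\<exists>c. t = tl s @ [c]"
      then obtain c where "t = tl s @ [c]" by blast
      then show "t \<in> T" unfolding T_def t0_def t1_def by (cases c) simp_all
    next
      assume "t \<in> T"
      then show "\<exists>c. t = tl s @ [c]" unfolding T_def t0_def t1_def by blast
    qed
    have "sw_adj w d s t = (if t \<in> T then 1 else 0)"
      unfolding sw_adj_def using s t h by simp
    then show "sw_adj w d s t * ?g t = (if t \<in> T then ?g t else 0)" by simp
  qed simp
  also have "\<dots> = (\<Sum>t\<in>?S \<inter> T. ?g t)"
    by (rule sum.inter_restrict[symmetric]) (rule finite_states)
  also have "\<dots> = (\<Sum>t\<in>T. ?g t)"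
  proof (rule sum.mono_neutral_right[symmetric])
    show "finite T" unfolding T_def by simp
    show "?S \<inter> T \<subseteq> T" by blast
    show "\<forall>i\<in>T - ?S \<inter> T. ?g i = 0"
    proof
      fix i assume i: "i \<in> T - ?S \<inter> T"
      then have "length i = w" "i \<notin> ?S" using lt unfolding T_def by auto
      then show "?g i = 0" using cnt_notin by simp
    qed
  qed
  also have "\<dots> = ?g t0 + ?g t1" unfolding T_def using ne by simp
  also have "\<dots> = real (cnt w d (Suc k) s)" using cnt_Suc[OF s w, of k] unfolding t0_def t1_def by simp
  finally show ?thesis by simp
qed

lemma adm_count:
  "card {v. length v = n \<and> sw_admissible w d v} \<le> (\<Sum>s\<in>sw_states w d. cnt w d n s)"
proof -
  have sub: "{v. length v = n \<and> sw_admissible w d v} \<subseteq> (\<Union>s\<in>sw_states w d. {v. length v = n \<and> valid w d s v})"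
  proof
    fix v assume "v \<in> {v. length v = n \<and> sw_admissible w d v}"
    then obtain init where "length v = n" "length init = w"
        "\<forall>i \<le> length v. ones (take w (drop i (init @ v))) \<le> d"
      unfolding sw_admissible_def by blast
    then have "valid w d init v" unfolding valid_def by blast
    moreover have "init \<in> sw_states w d" using valid_states \<open>length init = w\<close> calculation by blast
    ultimately show "v \<in> (\<Union>s\<in>sw_states w d. {v. length v = n \<and> valid w d s v})"
      using \<open>length v = n\<close> by blast
  qed
  have "card {v. length v = n \<and> sw_admissible w d v} \<le> card (\<Union>s\<in>sw_states w d. {v. length v = n \<and> valid w d s v})"
    by (rule card_mono[OF _ sub]) (auto intro: finite_UN_I finite_states fin_len_sub)
  also have "\<dots> \<le> (\<Sum>s\<in>sw_states w d. cnt w d n s)"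
    unfolding cnt_def by (rule card_UN_le[OF finite_states])
  finally show ?thesis .
qed



lemma numeric:
  fixes q B r Fc A M :: real and n K :: nat
  assumes q: "q > 1" and B: "B > 0" and r: "r > 0" and Fc: "Fc \<ge> 1" and n: "n \<ge> 1"
    and h1: "q ^ n \<le> A * M * Fc" and h2: "A \<le> B * real (n+1) ^ K * r ^ n"
    and M: "M = q ^ m" and m: "real m \<le> real d * real n / real w + real d"
  shows "1 - real d / real w - log q r - (log q B + real K * log q (real (n+1)) + real d) / real n
         \<le> log q Fc / real n"
proof -
  have Mp: "M > 0" using M q by simp
  have "A * M * Fc \<le> (B * real (n+1) ^ K * r ^ n) * M * Fc"
    using h2 Mp Fc by (intro mult_right_mono) auto
  then have "q ^ n \<le> (B * real (n+1) ^ K * r ^ n) * M * Fc" using h1 by linarith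
  then have "log q (q ^ n) \<le> log q ((B * real (n+1) ^ K * r ^ n) * M * Fc)"
    using q B r Mp Fc by (intro log_mono) auto
  also have "log q ((B * real (n+1) ^ K * r ^ n) * M * Fc)
      = log q B + real K * log q (real (n+1)) + real n * log q r + real m + log q Fc"
    using q B r Fc unfolding M by (simp add: log_mult log_nat_power)
  finally have L: "real n \<le> log q B + real K * log q (real (n+1)) + real n * log q r + real m + log q Fc"
    using q by simp
  define E where "E = log q B + real K * log q (real (n+1)) + real d"
  have "real n * (1 - real d / real w - log q r) - E \<le> log q Fc"
    using L m unfolding E_def by (simp add: algebra_simps)
  then have "(real n * (1 - real d / real w - log q r) - E) / real n \<le> log q Fc / real n"
    using n by (intro divide_right_mono) auto
  moreover have "(real n * (1 - real d / real w - log q r) - E) / real n = 1 - real d / real w - log q r - E / real n"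
    using n by (simp add: field_simps)
  ultimately show ?thesis unfolding E_def by simp
qed

lemma greedy:
  assumes "finite V" "\<forall>x\<in>V. R x x" "\<forall>x\<in>V. \<forall>y\<in>V. R x y \<longrightarrow> R y x"
    "\<forall>x\<in>V. card {y\<in>V. R x y} \<le> D"
  shows "\<exists>F\<subseteq>V. (\<forall>x\<in>F. \<forall>y\<in>F. x \<noteq> y \<longrightarrow> \<not> R x y) \<and> card V \<le> D * card F"
  using assms
proof (induct "card V" arbitrary: V rule: less_induct)
  case (less V)
  show ?case
  proof (cases "V = {}")
    case True then show ?thesis by (intro exI[of _ "{}"]) auto
  next
    case False
    then obtain x where x: "x \<in> V" by blast
    define Nx where "Nx = {y\<in>V. R x y}"
    define V' where "V' = V - Nx"
    have xN: "x \<in> Nx" using x less(3) unfolding Nx_def by auto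
    have NV: "Nx \<subseteq> V" unfolding Nx_def by auto
    have finV': "finite V'" using less(2) unfolding V'_def by simp
    have "V' \<subset> V" unfolding V'_def using xN x by blast
    then have lt: "card V' < card V" using less(2) by (rule psubset_card_mono[rotated])
    have "\<exists>F\<subseteq>V'. (\<forall>x\<in>F. \<forall>y\<in>F. x \<noteq> y \<longrightarrow> \<not> R x y) \<and> card V' \<le> D * card F"
    proof (rule less(1)[OF lt finV'])
      show "\<forall>x\<in>V'. R x x" using less(3) unfolding V'_def by auto
      show "\<forall>x\<in>V'. \<forall>y\<in>V'. R x y \<longrightarrow> R y x" using less(4) unfolding V'_def by auto
      show "\<forall>z\<in>V'. card {y\<in>V'. R z y} \<le> D"
      proof
        fix z assume z: "z \<in> V'"
        have "card {y\<in>V'. R z y} \<le> card {y\<in>V. R z y}"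
          using less(2) unfolding V'_def by (intro card_mono) auto
        also have "\<dots> \<le> D" using less(5) z unfolding V'_def by auto
        finally show "card {y\<in>V'. R z y} \<le> D" .
      qed
    qed
    then obtain F' where F': "F' \<subseteq> V'" "\<forall>x\<in>F'. \<forall>y\<in>F'. x \<noteq> y \<longrightarrow> \<not> R x y" "card V' \<le> D * card F'"
      by blast
    have xF': "x \<notin> F'" using F'(1) xN unfolding V'_def by auto
    have finF': "finite F'" using F'(1) finV' by (rule finite_subset)
    have ind: "\<forall>a\<in>insert x F'. \<forall>b\<in>insert x F'. a \<noteq> b \<longrightarrow> \<not> R a b"
    proof (intro ballI impI)
      fix a b assume a: "a \<in> insert x F'" and b: "b \<in> insert x F'" and ab: "a \<noteq> b"
      have nR: "\<And>y. y \<in> F' \<Longrightarrow> \<not> R x y" using F'(1) unfolding V'_def Nx_def by auto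
      have yV: "\<And>y. y \<in> F' \<Longrightarrow> y \<in> V" using F'(1) unfolding V'_def by auto
      show "\<not> R a b"
      proof (cases "a = x")
        case True then show ?thesis using b ab nR by auto
      next
        case False
        then have aF: "a \<in> F'" using a by auto
        show ?thesis
        proof (cases "b = x")
          case True
          then show ?thesis using nR[OF aF] less(4) x yV[OF aF] by blast
        next
          case False
          then show ?thesis using F'(2) aF b ab by auto
        qed
      qed
    qed
    have finN: "finite Nx" using less(2) NV by (rule rev_finite_subset)
    have "card V' = card V - card Nx" unfolding V'_def by (rule card_Diff_subset[OF finN NV])
    moreover have "card Nx \<le> card V" by (rule card_mono[OF less(2) NV])
    ultimately have "card V = card V' + card Nx" by simp
    also have "\<dots> \<le> D * card F' + D" using F'(3) less(5) x unfolding Nx_def by (intro add_mono) auto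
    also have "\<dots> = D * card (insert x F')" using xF' finF' by simp
    finally have cV: "card V \<le> D * card (insert x F')" .
    have "insert x F' \<subseteq> V" using F'(1) x unfolding V'_def by blast
    then show ?thesis using ind cV by (intro exI[of _ "insert x F'"]) simp
  qed
qed

lemma e_lim:
  fixes q c :: real and K :: nat
  assumes q: "q > 1"
  shows "(\<lambda>n. (c + real K * log q (real (n+1)) + real d) / real n) \<longlonglongrightarrow> 0"
proof -
  have l1: "(\<lambda>n. ln (real n) / real n) \<longlonglongrightarrow> 0"
    by (rule filterlim_compose[OF ln_x_over_x_tendsto_0 filterlim_real_sequentially])
  have l2: "(\<lambda>n. ln (real (Suc n)) / real (Suc n)) \<longlonglongrightarrow> 0"
    using LIMSEQ_Suc[OF l1] by simp
  have l3: "(\<lambda>n. real (Suc n) / real n) \<longlonglongrightarrow> 1"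
    using LIMSEQ_Suc_n_over_n[where 'a=real] by simp
  have l4: "(\<lambda>n. ln (real (Suc n)) / real (Suc n) * (real (Suc n) / real n)) \<longlonglongrightarrow> 0"
    using tendsto_mult[OF l2 l3] by simp
  have l5: "(\<lambda>n. (c + real d) / real n) \<longlonglongrightarrow> 0"
    by (rule tendsto_divide_0[OF tendsto_const filterlim_at_top_imp_at_infinity[OF filterlim_real_sequentially]])
  have l6: "(\<lambda>n. (c + real d) / real n + real K / ln q * (ln (real (Suc n)) / real (Suc n) * (real (Suc n) / real n))) \<longlonglongrightarrow> 0"
    using tendsto_add[OF l5 tendsto_mult[OF tendsto_const l4, of "real K / ln q"]] by simp
  show ?thesis
  proof (rule Lim_transform_eventually[OF l6])
    show "\<forall>\<^sub>F n in sequentially. (c + real d) / real n + real K / ln q * (ln (real (Suc n)) / real (Suc n) * (real (Suc n) / real n))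
       = (c + real K * log q (real (n+1)) + real d) / real n"
    proof (rule eventually_sequentiallyI[of 1])
      fix n :: nat assume "1 \<le> n"
      then show "(c + real d) / real n + real K / ln q * (ln (real (Suc n)) / real (Suc n) * (real (Suc n) / real n))
       = (c + real K * log q (real (n+1)) + real d) / real n"
      proof -
        have n0: "real n > 0" using \<open>1 \<le> n\<close> by simp
        have s0: "real (Suc n) > 0" by simp
        have lq: "ln q > 0" using q by simp
        define L where "L = ln (real (Suc n))"
        define S where "S = real (Suc n)"
        have a: "L / S * (S / real n) = L / real n"
          using s0 n0 unfolding S_def by simp
        have b: "log q (real (n+1)) = L / ln q" unfolding L_def log_def by simp
        have "(c + real d) / real n + real K / ln q * (L / S * (S / real n))
            = (c + real K * (L / ln q) + real d) / real n"
          unfolding a using n0 lq by (simp add: field_simps)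
        then show ?thesis unfolding b L_def S_def .
      qed
    qed
  qed
qed

lemma conf_card:
  fixes x :: "'a::finite list"
  assumes w: "1 \<le> w" and lx: "length x = n"
  shows "card {y::'a list. length y = n \<and> (\<exists>v. length v = n \<and> sw_admissible w d v \<and> (\<forall>i<n. \<not> v!i \<longrightarrow> x!i = y!i))}
     \<le> card {v. length v = n \<and> sw_admissible w d v} * CARD('a) ^ (d * (n div w + 1))"
proof -
  define Adm where "Adm = {v. length v = n \<and> sw_admissible w d v}"
  define m where "m = d * (n div w + 1)"
  define Y where "Y = (\<lambda>v. {y::'a list. length y = n \<and> (\<forall>i<n. \<not> v!i \<longrightarrow> x!i = y!i)})"
  have finA: "finite Adm" unfolding Adm_def by (rule fin_len_sub)
  have sub: "{y::'a list. length y = n \<and> (\<exists>v. length v = n \<and> sw_admissible w d v \<and> (\<forall>i<n. \<not> v!i \<longrightarrow> x!i = y!i))}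
      \<subseteq> (\<Union>v\<in>Adm. Y v)" unfolding Adm_def Y_def by blast
  have finY: "finite (Y v)" for v
    by (rule rev_finite_subset[OF finite_lists_univ[where 'a='a, of n]]) (auto simp: Y_def)
  have cY: "card (Y v) \<le> CARD('a) ^ m" if v: "v \<in> Adm" for v
  proof -
    have lv: "length v = n" "sw_admissible w d v" using v unfolding Adm_def by auto
    have inj: "inj_on (proj v) (Y v)"
    proof (rule inj_onI)
      fix y y' assume y: "y \<in> Y v" "y' \<in> Y v" "proj v y = proj v y'"
      show "y = y'"
      proof (rule proj_inj[of y v y'])
        show "length y = length v" "length y' = length v" using y lv unfolding Y_def by auto
        show "\<forall>i<length v. \<not> v ! i \<longrightarrow> y ! i = y' ! i" using y lv unfolding Y_def by auto
        show "proj v y = proj v y'" by (rule y(3))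
      qed
    qed
    have im: "proj v ` Y v \<subseteq> {zs :: 'a list. length zs = ones v}"
    proof
      fix z assume "z \<in> proj v ` Y v"
      then obtain y where "y \<in> Y v" "z = proj v y" by blast
      then show "z \<in> {zs :: 'a list. length zs = ones v}" using proj_len[of y v] lv unfolding Y_def by simp
    qed
    have "card (Y v) = card (proj v ` Y v)" using card_image[OF inj] by simp
    also have "\<dots> \<le> card {zs :: 'a list. length zs = ones v}" by (rule card_mono[OF finite_lists_univ im])
    also have "\<dots> = CARD('a) ^ ones v" by (rule card_lists_univ)
    also have "\<dots> \<le> CARD('a) ^ m"
    proof (rule power_increasing)
      show "ones v \<le> m" using adm_ones[OF lv(2) w] lv(1) unfolding m_def by simp
      show "1 \<le> CARD('a)" by (simp add: Suc_leI)
    qed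
    finally show ?thesis .
  qed
  have "card {y::'a list. length y = n \<and> (\<exists>v. length v = n \<and> sw_admissible w d v \<and> (\<forall>i<n. \<not> v!i \<longrightarrow> x!i = y!i))}
      \<le> card (\<Union>v\<in>Adm. Y v)" by (rule card_mono[OF _ sub]) (auto intro: finA finY)
  also have "\<dots> \<le> (\<Sum>v\<in>Adm. card (Y v))" by (rule card_UN_le[OF finA])
  also have "\<dots> \<le> card Adm * CARD('a) ^ m" using sum_bounded_above[of Adm "\<lambda>v. card (Y v)", OF cY] by simp
  finally show ?thesis unfolding Adm_def m_def .
qed

lemma zero_adm: "sw_admissible w d (replicate n False)"
proof -
  have "\<forall>i \<le> n. ones (take w (drop i (replicate w False @ replicate n False))) \<le> d"
    by (simp add: ones_def)
  then show ?thesis unfolding sw_admissible_def by (intro exI[of _ "replicate w False"]) simp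
qed



lemma cap_nonempty:
  "{log (real CARD('a)) (real (card F)) / real n | n F.
      n \<ge> 1 \<and> F \<noteq> {} \<and> zero_error_code w d n (F :: 'a::finite list set)} \<noteq> {}"
proof -
  have "zero_error_code w d 1 {[undefined :: 'a]}" unfolding zero_error_code_def by simp
  then show ?thesis by blast
qed

lemma cap_bound:
  assumes w: "1 \<le> w" and d: "d \<le> w" and q: "CARD('a::finite) \<ge> 2"
  shows "\<forall>y \<in> {log (real CARD('a)) (real (card F)) / real n | n F.
      n \<ge> 1 \<and> F \<noteq> {} \<and> zero_error_code w d n (F :: 'a::finite list set)}. y \<le> 1 - real d / real w"
  using code_rate_upper[OF _ _ _ w d q] by blast

lemma cap_le:
  assumes w: "1 \<le> w" and d: "d \<le> w" and q: "CARD('a::finite) \<ge> 2"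
  shows "zero_error_capacity w d TYPE('a) \<le> 1 - real d / real w"
  unfolding zero_error_capacity_def
  by (rule cSup_least[OF cap_nonempty]) (use cap_bound[OF w d q] in blast)

lemma cap_ge:
  assumes w: "1 \<le> w" and d: "d \<le> w" and q: "CARD('a::finite) \<ge> 2"
    and F: "zero_error_code w d n (F :: 'a list set)" "n \<ge> 1" "F \<noteq> {}"
  shows "log (real CARD('a)) (real (card F)) / real n \<le> zero_error_capacity w d TYPE('a)"
  unfolding zero_error_capacity_def
proof (rule cSup_upper)
  show "log (real CARD('a)) (real (card F)) / real n \<in> {log (real CARD('a)) (real (card F)) / real n | n F.
      n \<ge> 1 \<and> F \<noteq> {} \<and> zero_error_code w d n (F :: 'a::finite list set)}" using F by blast
  show "bdd_above {log (real CARD('a)) (real (card F)) / real n | n F.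
      n \<ge> 1 \<and> F \<noteq> {} \<and> zero_error_code w d n (F :: 'a::finite list set)}"
    using cap_bound[OF w d q] by (intro bdd_aboveI[of _ "1 - real d / real w"]) blast
qed

lemma code_from_indep:
  assumes len: "\<forall>x\<in>F. length x = n"
    and ind: "\<forall>x\<in>F. \<forall>y\<in>F. x \<noteq> y \<longrightarrow>
       \<not> (\<exists>v. length v = n \<and> sw_admissible w d v \<and> (\<forall>i<n. \<not> v!i \<longrightarrow> x!i = y!i))"
  shows "zero_error_code w d n F"
  unfolding zero_error_code_def
proof (intro conjI ballI allI impI)
  fix x assume "x \<in> F" then show "length x = n" using len by blast
next
  fix x x' v v' assume x: "x \<in> F" "x' \<in> F" "x \<noteq> x'" and v: "length v = n" "length v' = n"
    "sw_admissible w d v" "sw_admissible w d v'"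
  show "sw_output x v \<noteq> sw_output x' v'"
  proof
    assume "sw_output x v = sw_output x' v'"
    from out_eq[OF _ _ v(1,2) this] len x
    have "v = v'" "\<forall>i<n. \<not> v!i \<longrightarrow> x!i = x'!i" by auto
    then show False using ind x v by blast
  qed
qed

lemma main_lower:
  assumes w: "1 \<le> w" and d: "d \<le> w" and q: "CARD('a::finite) \<ge> 2" and r: "r > 0"
    and eig: "\<And>\<mu>. is_eigenvalue (sw_adj w d) (sw_states w d) \<mu> \<Longrightarrow> cmod \<mu> \<le> r"
  shows "1 - real d / real w - log (real CARD('a)) r \<le> zero_error_capacity w d TYPE('a)"
proof -
  let ?S = "sw_states w d"
  define z where "z = replicate w False"
  have zS: "z \<in> ?S" unfolding z_def sw_states_def ones_def by simp
  have ne: "?S \<noteq> {}" using zS by blast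
  obtain C K where CK: "\<forall>k s. s\<in>?S \<longrightarrow> \<bar>real (cnt w d k s)\<bar> \<le> C * real (k+1)^K * r^k"
  proof -
    have "\<exists>C. \<exists>K::nat. \<forall>k s. s\<in>?S \<longrightarrow> \<bar>real (cnt w d k s)\<bar> \<le> C * real (k+1)^K * r^k"
    proof (rule growth_bound[OF finite_states ne r eig])
      show "\<And>s. s \<in> ?S \<Longrightarrow> real (cnt w d 0 s) = 1" using cnt0 by simp
      show "\<And>k s. s \<in> ?S \<Longrightarrow> real (cnt w d (Suc k) s) = (\<Sum>t\<in>?S. sw_adj w d s t * real (cnt w d k t))"
        using cnt_rec[OF _ w] by blast
    qed
    then show ?thesis using that by blast
  qed
  have C1: "1 \<le> C" using CK[rule_format, OF zS, of 0] cnt0[OF zS] by simp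
  define N where "N = card ?S"
  have N1: "N \<ge> 1" unfolding N_def using finite_states ne by (simp add: Suc_le_eq card_gt_0_iff)
  define B where "B = real N * C"
  have B0: "B > 0" unfolding B_def using N1 C1 by simp
  define Q where "Q = real CARD('a)"
  have Q1: "Q > 1" unfolding Q_def using q by simp
  have adm_bound: "real (card {v. length v = n \<and> sw_admissible w d v}) \<le> B * real (n+1)^K * r^n" for n
  proof -
    have "real (card {v. length v = n \<and> sw_admissible w d v}) \<le> real (\<Sum>s\<in>?S. cnt w d n s)"
      using adm_count[of n w d] by linarith
    also have "\<dots> = (\<Sum>s\<in>?S. real (cnt w d n s))" by simp
    also have "\<dots> \<le> (\<Sum>s\<in>?S. C * real (n+1)^K * r^n)"
    proof (rule sum_mono)
      fix s assume "s \<in> ?S"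
      then show "real (cnt w d n s) \<le> C * real (n+1)^K * r^n" using CK by fastforce
    qed
    also have "\<dots> = B * real (n+1)^K * r^n" unfolding B_def N_def by simp
    finally show ?thesis .
  qed
  define e where "e = (\<lambda>n. (log Q B + real K * log Q (real (n+1)) + real d) / real n)"
  define a where "a = 1 - real d / real w - log Q r"
  have key: "a - e n \<le> zero_error_capacity w d TYPE('a)" if n: "n \<ge> 1" for n
  proof -
    define V where "V = {x :: 'a list. length x = n}"
    define R where "R = (\<lambda>x y :: 'a list. \<exists>v. length v = n \<and> sw_admissible w d v \<and> (\<forall>i<n. \<not> v!i \<longrightarrow> x!i = y!i))"
    define Adm where "Adm = {v. length v = n \<and> sw_admissible w d v}"
    define m where "m = d * (n div w + 1)"
    define D where "D = card Adm * CARD('a) ^ m"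
    have "\<exists>F\<subseteq>V. (\<forall>x\<in>F. \<forall>y\<in>F. x \<noteq> y \<longrightarrow> \<not> R x y) \<and> card V \<le> D * card F"
    proof (rule greedy)
      show "finite V" unfolding V_def by (rule finite_lists_univ)
      show "\<forall>x\<in>V. R x x" unfolding R_def using zero_adm[of w d n] by (intro ballI exI[of _ "replicate n False"]) simp
      show "\<forall>x\<in>V. \<forall>y\<in>V. R x y \<longrightarrow> R y x" unfolding R_def by metis
      show "\<forall>x\<in>V. card {y\<in>V. R x y} \<le> D"
      proof
        fix x assume "x \<in> V"
        then have lx: "length x = n" unfolding V_def by simp
        have "{y\<in>V. R x y} = {y::'a list. length y = n \<and> (\<exists>v. length v = n \<and> sw_admissible w d v \<and> (\<forall>i<n. \<not> v!i \<longrightarrow> x!i = y!i))}"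
          unfolding V_def R_def by blast
        then show "card {y\<in>V. R x y} \<le> D" using conf_card[OF w lx, of d] unfolding D_def Adm_def m_def by simp
      qed
    qed
    then obtain F where F: "F \<subseteq> V" "\<forall>x\<in>F. \<forall>y\<in>F. x \<noteq> y \<longrightarrow> \<not> R x y" "card V \<le> D * card F" by blast
    have code: "zero_error_code w d n F"
      by (rule code_from_indep) (use F in \<open>auto simp: V_def R_def\<close>)
    have cV: "card V = CARD('a) ^ n" unfolding V_def by (rule card_lists_univ)
    have cF: "card F \<ge> 1"
    proof (rule ccontr)
      assume "\<not> card F \<ge> 1"
      then have "card F = 0" by simp
      then have "card V = 0" using F(3) by simp
      then show False using cV by simp
    qed
    then have Fne: "F \<noteq> {}" by auto
    have h1: "Q ^ n \<le> real (card Adm) * Q ^ m * real (card F)"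
    proof -
      have "CARD('a) ^ n \<le> card Adm * CARD('a) ^ m * card F" using F(3) cV unfolding D_def by simp
      then have "real (CARD('a) ^ n) \<le> real (card Adm * CARD('a) ^ m * card F)" by (simp only: of_nat_le_iff)
      then show ?thesis unfolding Q_def by simp
    qed
    have mb: "real m \<le> real d * real n / real w + real d"
    proof -
      have "real (n div w) \<le> real n / real w" by (rule of_nat_div_le_of_nat)
      then have "real d * real (n div w) \<le> real d * (real n / real w)" by (intro mult_left_mono) auto
      then show ?thesis unfolding m_def by (simp add: algebra_simps)
    qed
    have "a - e n \<le> log Q (real (card F)) / real n"
      unfolding a_def e_def
      by (rule numeric[OF Q1 B0 r _ n h1 _ refl mb]) (use cF adm_bound[of n] in \<open>auto simp: Adm_def\<close>)
    also have "\<dots> \<le> zero_error_capacity w d TYPE('a)"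
      unfolding Q_def by (rule cap_ge[OF w d q code n Fne])
    finally show ?thesis .
  qed
  have lim: "(\<lambda>n. a - e n) \<longlonglongrightarrow> a - 0"
    unfolding e_def by (intro tendsto_diff tendsto_const e_lim[OF Q1])
  have "zero_error_capacity w d TYPE('a) \<ge> a"
    using tendsto_upperbound[OF lim[simplified] _ trivial_limit_sequentially] key
    by (simp add: eventually_sequentially) (meson)
  then show ?thesis unfolding a_def Q_def .
qed



theorem corollary1:
  fixes w d :: nat
  assumes "1 \<le> w" and "d \<le> w" and "CARD('a::finite) \<ge> 2"
  shows "1 - real d / real w - h_ch (real CARD('a)) w d
           \<le> zero_error_capacity w d TYPE('a)
       \<and> zero_error_capacity w d TYPE('a) \<le> 1 - real d / real w"
proof
  show "zero_error_capacity w d TYPE('a) \<le> 1 - real d / real w" by (rule cap_le[OF assms])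
next
  let ?S = "sw_states w d"
  let ?A = "sw_adj w d"
  define N where "N = card ?S"
  obtain f where f: "bij_betw f {0..<N} ?S"
    using ex_bij_betw_nat_finite[OF finite_states] N_def by blast
  have zS: "replicate w False \<in> ?S" unfolding sw_states_def ones_def by simp
  have N: "N > 0" unfolding N_def using finite_states zS by (auto simp: card_gt_0_iff)
  define M where "M = Mof ?A f N 1"
  have Mc: "M \<in> carrier_mat N N" unfolding M_def by (rule Mof_carrier)
  define E where "E = {cmod \<mu> | \<mu>. is_eigenvalue ?A ?S \<mu>}"
  have sub: "{\<mu>. is_eigenvalue ?A ?S \<mu>} \<subseteq> spectrum M"
    using is_to_eig[OF f, of 1 ?A] unfolding M_def spectrum_def by auto
  have finE: "finite E"
  proof -
    have "E = cmod ` {\<mu>. is_eigenvalue ?A ?S \<mu>}" unfolding E_def by blast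
    moreover have "finite {\<mu>. is_eigenvalue ?A ?S \<mu>}"
      using card_finite_spectrum(1)[OF Mc] sub by (rule finite_subset[rotated])
    ultimately show ?thesis by simp
  qed
  have neE: "E \<noteq> {}"
  proof -
    obtain \<mu> where "\<mu> \<in> spectrum M" using spectrum_non_empty[OF Mc N] by blast
    then obtain v where "eigenvector M v \<mu>" unfolding spectrum_def eigenvalue_def by auto
    from eig_to_is[OF f _ this[unfolded M_def]] have "is_eigenvalue ?A ?S \<mu>" by simp
    then show ?thesis unfolding E_def by blast
  qed
  define lam where "lam = perron_eigenvalue ?A ?S"
  have lamE: "lam = Max E" unfolding lam_def perron_eigenvalue_def E_def by simp
  have eig: "\<And>\<mu>. is_eigenvalue ?A ?S \<mu> \<Longrightarrow> cmod \<mu> \<le> lam"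
    unfolding lamE using finE by (intro Max_ge) (auto simp: E_def)
  have lam0: "lam \<ge> 0"
  proof -
    obtain y where "y \<in> E" using neE by blast
    then have "y \<le> lam" "y \<ge> 0" unfolding lamE using finE by (auto simp: E_def)
    then show ?thesis by simp
  qed
  have h: "h_ch (real CARD('a)) w d = log (real CARD('a)) lam" unfolding h_ch_def lam_def ..
  show "1 - real d / real w - h_ch (real CARD('a)) w d \<le> zero_error_capacity w d TYPE('a)"
  proof (cases "lam > 0")
    case True
    show ?thesis unfolding h by (rule main_lower[OF assms True eig])
  next
    case False
    then have l0: "lam = 0" using lam0 by simp
    have "1 - real d / real w - log (real CARD('a)) 1 \<le> zero_error_capacity w d TYPE('a)"
    proof (rule main_lower[OF assms])
      fix \<mu> assume "is_eigenvalue ?A ?S \<mu>"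
      from eig[OF this] l0 show "cmod \<mu> \<le> 1" by simp
    qed simp
    then show ?thesis unfolding h l0 by (simp add: log_def)
  qed
qed


end
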